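(* Let $W\in[0,1]^{k\times k}$ be a symmetric positive semidefinite matrix with unit diagonal, $\mu>0$, and consider linear utilities $u_i({\boldsymbol\theta})=W_i^\top{\boldsymbol\theta}$ ($W_i$ the $i$-th column of $W$) with thresholds $\mu_i=\mu$ and strategy space $\mathbb{R}_+^k$. Let ${\boldsymbol\theta}^{\mathrm{eq}}$ be an optimal stable equilibrium, $I=\{i:\theta^{\mathrm{eq}}_i=0\}$, and $\bar W,\bar{\boldsymbol\theta}^{\mathrm{eq}}$ the restrictions of $W$ (rows and columns) and ${\boldsymbol\theta}^{\mathrm{eq}}$ to $[k]\setminus I$. Then $\bar{\boldsymbol\theta}^{\mathrm{eq}}$ is an optimal solution of $\min_{\bf x}\{\mathbf{1}^\top{\bf x}:\bar W{\bf x}\ge\mu\mathbf{1},\ {\bf x}\ge\mathbf{0}\}$.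
   Context: ${\boldsymbol\theta}$ is feasible if $u_i({\boldsymbol\theta})\ge\mu$ for all $i$. A feasible ${\boldsymbol\theta}\in\mathbb{R}_+^k$ is a stable equilibrium if for no $i$ is there $0\le\theta_i'<\theta_i$ with $u_i(\theta_i',{\boldsymbol\theta}_{-i})\ge\mu$ (${\boldsymbol\theta}$ with $i$-th entry replaced). An optimal stable equilibrium minimizes $\mathbf{1}^\top{\boldsymbol\theta}$ among stable equilibria. *)

theory Defs
  imports "HOL-Analysis.Analysis"
begin

text \<open>Indices are 0..k-1; vectors in R^k are functions nat => real, only the values on
  {..<k} matter. The matrix W is nat => nat => real, W i j the (i,j) entry.\<close>

definition util :: "nat \<Rightarrow> (nat \<Rightarrow> nat \<Rightarrow> real) \<Rightarrow> nat \<Rightarrow> (nat \<Rightarrow> real) \<Rightarrow> real" where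
  "util k W i \<theta> = (\<Sum>j<k. W j i * \<theta> j)"

definition nonneg_vec :: "nat \<Rightarrow> (nat \<Rightarrow> real) \<Rightarrow> bool" where
  "nonneg_vec k \<theta> \<longleftrightarrow> (\<forall>i<k. \<theta> i \<ge> 0)"

definition feasible :: "nat \<Rightarrow> (nat \<Rightarrow> nat \<Rightarrow> real) \<Rightarrow> real \<Rightarrow> (nat \<Rightarrow> real) \<Rightarrow> bool" where
  "feasible k W \<mu> \<theta> \<longleftrightarrow> (\<forall>i<k. util k W i \<theta> \<ge> \<mu>)"

definition stable_eq :: "nat \<Rightarrow> (nat \<Rightarrow> nat \<Rightarrow> real) \<Rightarrow> real \<Rightarrow> (nat \<Rightarrow> real) \<Rightarrow> bool" where
  "stable_eq k W \<mu> \<theta> \<longleftrightarrow> nonneg_vec k \<theta> \<and> feasible k W \<mu> \<theta> \<and>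
     (\<forall>i<k. \<not> (\<exists>t. 0 \<le> t \<and> t < \<theta> i \<and> util k W i (\<theta>(i := t)) \<ge> \<mu>))"

definition optimal_stable_eq :: "nat \<Rightarrow> (nat \<Rightarrow> nat \<Rightarrow> real) \<Rightarrow> real \<Rightarrow> (nat \<Rightarrow> real) \<Rightarrow> bool" where
  "optimal_stable_eq k W \<mu> \<theta> \<longleftrightarrow> stable_eq k W \<mu> \<theta> \<and>
     (\<forall>\<theta>'. stable_eq k W \<mu> \<theta>' \<longrightarrow> (\<Sum>i<k. \<theta> i) \<le> (\<Sum>i<k. \<theta>' i))"

definition lp_feasible :: "nat set \<Rightarrow> (nat \<Rightarrow> nat \<Rightarrow> real) \<Rightarrow> real \<Rightarrow> (nat \<Rightarrow> real) \<Rightarrow> bool" where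
  "lp_feasible J W \<mu> x \<longleftrightarrow> (\<forall>i\<in>J. (\<Sum>j\<in>J. W i j * x j) \<ge> \<mu>) \<and> (\<forall>j\<in>J. x j \<ge> 0)"

definition lp_optimal :: "nat set \<Rightarrow> (nat \<Rightarrow> nat \<Rightarrow> real) \<Rightarrow> real \<Rightarrow> (nat \<Rightarrow> real) \<Rightarrow> bool" where
  "lp_optimal J W \<mu> x \<longleftrightarrow> lp_feasible J W \<mu> x \<and>
     (\<forall>y. lp_feasible J W \<mu> y \<longrightarrow> (\<Sum>j\<in>J. x j) \<le> (\<Sum>j\<in>J. y j))"

end

theory Submission
  imports Defs
begin

lemma util_upd:
  assumes "i < k"
  shows "util k W i (\<theta>(i := t)) = util k W i \<theta> + W i i * (t - \<theta> i)"
proof -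
  have "util k W i (\<theta>(i := t)) = (\<Sum>j<k. W j i * \<theta> j + (if j = i then W i i * (t - \<theta> i) else 0))"
    unfolding util_def by (rule sum.cong) (auto simp: algebra_simps)
  also have "\<dots> = util k W i \<theta> + W i i * (t - \<theta> i)"
    using assms by (simp add: sum.distrib util_def)
  finally show ?thesis .
qed

theorem lemma2:
  fixes k :: nat and W :: "nat \<Rightarrow> nat \<Rightarrow> real" and \<mu> :: real and \<theta> :: "nat \<Rightarrow> real"
  assumes entries: "\<forall>i<k. \<forall>j<k. 0 \<le> W i j \<and> W i j \<le> 1"
    and sym: "\<forall>i<k. \<forall>j<k. W i j = W j i"
    and diag: "\<forall>i<k. W i i = 1"
    and psd: "\<forall>v :: nat \<Rightarrow> real. (\<Sum>i<k. \<Sum>j<k. v i * W i j * v j) \<ge> 0"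
    and mu: "\<mu> > 0"
    and opt: "optimal_stable_eq k W \<mu> \<theta>"
  shows "lp_optimal ({..<k} - {i. i < k \<and> \<theta> i = 0}) W \<mu> \<theta>"
proof -
  define J where "J = {..<k} - {i. i < k \<and> \<theta> i = 0}"
  have st: "stable_eq k W \<mu> \<theta>" using opt unfolding optimal_stable_eq_def by blast
  have nn: "\<forall>i<k. \<theta> i \<ge> 0" using st unfolding stable_eq_def nonneg_vec_def by blast
  have fe: "\<forall>i<k. util k W i \<theta> \<ge> \<mu>" using st unfolding stable_eq_def feasible_def by blast
  have ns: "\<forall>i<k. \<not> (\<exists>t. 0 \<le> t \<and> t < \<theta> i \<and> util k W i (\<theta>(i := t)) \<ge> \<mu>)"
    using st unfolding stable_eq_def by blast
  have finJ: "finite J" unfolding J_def by simp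
  have Jsub: "J \<subseteq> {..<k}" unfolding J_def by auto
  have eq: "util k W i \<theta> = \<mu>" if "i < k" "\<theta> i > 0" for i
  proof (rule ccontr)
    assume "util k W i \<theta> \<noteq> \<mu>"
    with fe that have gt: "util k W i \<theta> > \<mu>" by force
    define t where "t = max 0 (\<theta> i - (util k W i \<theta> - \<mu>))"
    have "0 \<le> t" "t < \<theta> i" using gt that unfolding t_def by auto
    moreover have "util k W i (\<theta>(i := t)) \<ge> \<mu>"
      using util_upd[OF that(1)] diag that(1) unfolding t_def by auto
    ultimately show False using ns that(1) by blast
  qed
  have usum: "util k W i \<theta> = (\<Sum>j\<in>J. W i j * \<theta> j)" if "i < k" for i
  proof -
    have "util k W i \<theta> = (\<Sum>j<k. W i j * \<theta> j)"
      unfolding util_def using sym that by (intro sum.cong) auto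
    also have "\<dots> = (\<Sum>j\<in>J. W i j * \<theta> j)"
      by (rule sum.mono_neutral_right) (auto simp: J_def)
    finally show ?thesis .
  qed
  have rowJ: "(\<Sum>j\<in>J. W i j * \<theta> j) = \<mu>" if "i \<in> J" for i
  proof -
    have "i < k" "\<theta> i > 0" using that nn unfolding J_def by force+
    thus ?thesis using eq usum by metis
  qed
  have feas: "lp_feasible J W \<mu> \<theta>"
    unfolding lp_feasible_def using rowJ nn Jsub by auto
  have "(\<Sum>j\<in>J. \<theta> j) \<le> (\<Sum>j\<in>J. y j)" if y: "lp_feasible J W \<mu> y" for y
  proof -
    have yr: "\<forall>i\<in>J. (\<Sum>j\<in>J. W i j * y j) \<ge> \<mu>" and yn: "\<forall>j\<in>J. y j \<ge> 0"
      using y unfolding lp_feasible_def by auto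
    have "(\<Sum>j\<in>J. \<theta> j) * \<mu> = (\<Sum>j\<in>J. \<theta> j * \<mu>)" by (simp add: sum_distrib_right)
    also have "\<dots> \<le> (\<Sum>j\<in>J. \<theta> j * (\<Sum>i\<in>J. W j i * y i))"
      using yr nn Jsub by (intro sum_mono mult_left_mono) auto
    also have "\<dots> = (\<Sum>j\<in>J. \<Sum>i\<in>J. y i * (W j i * \<theta> j))"
      by (simp add: sum_distrib_left algebra_simps)
    also have "\<dots> = (\<Sum>i\<in>J. \<Sum>j\<in>J. y i * (W j i * \<theta> j))"
      by (rule sum.swap)
    also have "\<dots> = (\<Sum>i\<in>J. y i * (\<Sum>j\<in>J. W i j * \<theta> j))"
      using sym Jsub by (auto simp: sum_distrib_left subset_iff intro!: sum.cong)
    also have "\<dots> = (\<Sum>i\<in>J. y i) * \<mu>"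
      using rowJ by (simp add: sum_distrib_right)
    finally show ?thesis using mu by simp
  qed
  with feas show ?thesis unfolding lp_optimal_def J_def by blast
qed

end
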